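(* Every function $\pi_{3,5}$ has maximum distortion at least $3$.
   Context: For positive integers $n,k$, let $\mathcal S_{n,k}$ be the set of all multisets of size $n$ with elements from $[k]=\{1,\dots,k\}$. A function $\pi_{n,k}$ assigns to each $S\in\mathcal S_{n,k}$ a string $\pi_{n,k}(S)$ of length $n$ (positions indexed by $[n]$) whose letters, counted with multiplicity, form exactly the multiset $S$. For strings $X,Y$ of equal length, $d(X,Y)$ denotes their Hamming distance. For multisets $A,B$, the symmetric difference $A\oplus B$ is the multiset obtained by removing from $A$ and from $B$ their maximal common sub-multiset and taking the union of what remains. A pair $S,S'\in\mathcal S_{n,k}$ with $|S\oplus S'|=2$ has distortion $d(\pi_{n,k}(S),\pi_{n,k}(S'))$; the maximum distortion of $\pi_{n,k}$ is the maximum distortion over all such pairs. *)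

theory Defs
  imports Main "HOL-Library.Multiset"
begin

definition msets :: "nat \<Rightarrow> nat \<Rightarrow> nat multiset set" where
  "msets n k = {S. size S = n \<and> set_mset S \<subseteq> {1..k}}"

definition msym_diff :: "'a multiset \<Rightarrow> 'a multiset \<Rightarrow> 'a multiset" where
  "msym_diff A B = (A - (A \<inter># B)) + (B - (A \<inter># B))"

definition hamming :: "'a list \<Rightarrow> 'a list \<Rightarrow> nat" where
  "hamming X Y = card {i. i < length X \<and> X ! i \<noteq> Y ! i}"

text \<open>A valid function pi_{n,k}: maps each S in S_{n,k} to a string of length n whose
  letters (with multiplicity) form exactly S. Strings are lists; position i in [n]
  corresponds to list index i-1.\<close>
definition valid_pi :: "nat \<Rightarrow> nat \<Rightarrow> (nat multiset \<Rightarrow> nat list) \<Rightarrow> bool" where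
  "valid_pi n k pi \<longleftrightarrow> (\<forall>S \<in> msets n k. length (pi S) = n \<and> mset (pi S) = S)"

definition max_distortion :: "nat \<Rightarrow> nat \<Rightarrow> (nat multiset \<Rightarrow> nat list) \<Rightarrow> nat" where
  "max_distortion n k pi = Max {hamming (pi S) (pi S') | S S'.
      S \<in> msets n k \<and> S' \<in> msets n k \<and> size (msym_diff S S') = 2}"

end

theory Submission
  imports Defs
begin

lemma perm3: assumes "length xs = 3" "mset xs = {#a,b,c#}" "a\<noteq>b" "a\<noteq>c" "b\<noteq>c"
  shows "xs=[a,b,c] \<or> xs=[a,c,b] \<or> xs=[b,a,c] \<or> xs=[b,c,a] \<or> xs=[c,a,b] \<or> xs=[c,b,a]"
proof -
  obtain x y z where xs: "xs=[x,y,z]" using assms(1)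
    by (cases xs; cases "tl xs"; cases "tl (tl xs)"; auto simp: numeral_3_eq_3)
  have s: "set xs = {a,b,c}" using assms(2) by (metis set_mset_mset set_mset_add_mset_insert set_mset_empty)
  have d: "distinct xs" using assms(1) s assms(3-5)
    by (metis card_distinct card_insert_disjoint empty_iff finite.emptyI finite.insertI insert_iff card.empty numeral_3_eq_3 One_nat_def)
  have m: "x \<in> {a,b,c}" "y \<in> {a,b,c}" "z \<in> {a,b,c}" "x\<noteq>y" "x\<noteq>z" "y\<noteq>z"
    using d s unfolding xs by auto
  show ?thesis unfolding xs using m assms(3-5) by (simp only: insert_iff empty_iff) (elim disjE; simp)
qed

lemma ham3: "hamming [a,b,c] [d,e,f::'a] = (if a=d then 0 else 1) + (if b=e then 0 else 1) + (if c=f then 0 else (1::nat))"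
proof -
  have "{i. i < length [a,b,c] \<and> [a,b,c]!i \<noteq> [d,e,f]!i} =
     (if a=d then {} else {0}) \<union> (if b=e then {} else {1}) \<union> (if c=f then {} else {2::nat})"
    by (auto simp: less_Suc_eq nth_Cons' numeral_2_eq_2 numeral_3_eq_3)
  then show ?thesis unfolding hamming_def by (auto split: if_splits)
qed
lemma core:
  fixes p0 p1 p2 p3 p4 p5 p6 p7 p8 p9 :: "nat list"
  assumes d0: "p0 = [1,2,3] \<or> p0 = [1,3,2] \<or> p0 = [2,1,3] \<or> p0 = [2,3,1] \<or> p0 = [3,1,2] \<or> p0 = [3,2,1]"
    and d1: "p1 = [1,2,4] \<or> p1 = [1,4,2] \<or> p1 = [2,1,4] \<or> p1 = [2,4,1] \<or> p1 = [4,1,2] \<or> p1 = [4,2,1]"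
    and d2: "p2 = [1,2,5] \<or> p2 = [1,5,2] \<or> p2 = [2,1,5] \<or> p2 = [2,5,1] \<or> p2 = [5,1,2] \<or> p2 = [5,2,1]"
    and d3: "p3 = [1,3,4] \<or> p3 = [1,4,3] \<or> p3 = [3,1,4] \<or> p3 = [3,4,1] \<or> p3 = [4,1,3] \<or> p3 = [4,3,1]"
    and d4: "p4 = [1,3,5] \<or> p4 = [1,5,3] \<or> p4 = [3,1,5] \<or> p4 = [3,5,1] \<or> p4 = [5,1,3] \<or> p4 = [5,3,1]"
    and d5: "p5 = [1,4,5] \<or> p5 = [1,5,4] \<or> p5 = [4,1,5] \<or> p5 = [4,5,1] \<or> p5 = [5,1,4] \<or> p5 = [5,4,1]"
    and d6: "p6 = [2,3,4] \<or> p6 = [2,4,3] \<or> p6 = [3,2,4] \<or> p6 = [3,4,2] \<or> p6 = [4,2,3] \<or> p6 = [4,3,2]"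
    and d7: "p7 = [2,3,5] \<or> p7 = [2,5,3] \<or> p7 = [3,2,5] \<or> p7 = [3,5,2] \<or> p7 = [5,2,3] \<or> p7 = [5,3,2]"
    and d8: "p8 = [2,4,5] \<or> p8 = [2,5,4] \<or> p8 = [4,2,5] \<or> p8 = [4,5,2] \<or> p8 = [5,2,4] \<or> p8 = [5,4,2]"
    and d9: "p9 = [3,4,5] \<or> p9 = [3,5,4] \<or> p9 = [4,3,5] \<or> p9 = [4,5,3] \<or> p9 = [5,3,4] \<or> p9 = [5,4,3]"
    and h0_1: "hamming p0 p1 \<le> 2"
    and h0_2: "hamming p0 p2 \<le> 2"
    and h0_3: "hamming p0 p3 \<le> 2"
    and h0_4: "hamming p0 p4 \<le> 2"
    and h0_6: "hamming p0 p6 \<le> 2"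
    and h0_7: "hamming p0 p7 \<le> 2"
    and h1_2: "hamming p1 p2 \<le> 2"
    and h1_3: "hamming p1 p3 \<le> 2"
    and h1_5: "hamming p1 p5 \<le> 2"
    and h1_6: "hamming p1 p6 \<le> 2"
    and h1_8: "hamming p1 p8 \<le> 2"
    and h2_4: "hamming p2 p4 \<le> 2"
    and h2_5: "hamming p2 p5 \<le> 2"
    and h2_7: "hamming p2 p7 \<le> 2"
    and h2_8: "hamming p2 p8 \<le> 2"
    and h3_4: "hamming p3 p4 \<le> 2"
    and h3_5: "hamming p3 p5 \<le> 2"
    and h3_6: "hamming p3 p6 \<le> 2"
    and h3_9: "hamming p3 p9 \<le> 2"
    and h4_5: "hamming p4 p5 \<le> 2"
    and h4_7: "hamming p4 p7 \<le> 2"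
    and h4_9: "hamming p4 p9 \<le> 2"
    and h5_8: "hamming p5 p8 \<le> 2"
    and h5_9: "hamming p5 p9 \<le> 2"
    and h6_7: "hamming p6 p7 \<le> 2"
    and h6_8: "hamming p6 p8 \<le> 2"
    and h6_9: "hamming p6 p9 \<le> 2"
    and h7_8: "hamming p7 p8 \<le> 2"
    and h7_9: "hamming p7 p9 \<le> 2"
    and h8_9: "hamming p8 p9 \<le> 2"
  shows False
proof -
  have c1: "p0 = [1,2,3] \<longrightarrow> \<not> (p1 = [2,1,4] \<or> p1 = [2,4,1] \<or> p1 = [4,1,2])" using h0_1 by (auto simp: ham3)
  have c2: "p0 = [1,3,2] \<longrightarrow> \<not> (p1 = [2,1,4] \<or> p1 = [2,4,1] \<or> p1 = [4,2,1])" using h0_1 by (auto simp: ham3)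
  have c3: "p0 = [2,1,3] \<longrightarrow> \<not> (p1 = [1,2,4] \<or> p1 = [1,4,2] \<or> p1 = [4,2,1])" using h0_1 by (auto simp: ham3)
  have c4: "p0 = [2,3,1] \<longrightarrow> \<not> (p1 = [1,2,4] \<or> p1 = [1,4,2] \<or> p1 = [4,1,2])" using h0_1 by (auto simp: ham3)
  have c5: "p0 = [3,1,2] \<longrightarrow> \<not> (p1 = [1,2,4] \<or> p1 = [2,4,1] \<or> p1 = [4,2,1])" using h0_1 by (auto simp: ham3)
  have c6: "p0 = [3,2,1] \<longrightarrow> \<not> (p1 = [1,4,2] \<or> p1 = [2,1,4] \<or> p1 = [4,1,2])" using h0_1 by (auto simp: ham3)
  have c7: "p0 = [1,2,3] \<longrightarrow> \<not> (p2 = [2,1,5] \<or> p2 = [2,5,1] \<or> p2 = [5,1,2])" using h0_2 by (auto simp: ham3)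
  have c8: "p0 = [1,3,2] \<longrightarrow> \<not> (p2 = [2,1,5] \<or> p2 = [2,5,1] \<or> p2 = [5,2,1])" using h0_2 by (auto simp: ham3)
  have c9: "p0 = [2,1,3] \<longrightarrow> \<not> (p2 = [1,2,5] \<or> p2 = [1,5,2] \<or> p2 = [5,2,1])" using h0_2 by (auto simp: ham3)
  have c10: "p0 = [2,3,1] \<longrightarrow> \<not> (p2 = [1,2,5] \<or> p2 = [1,5,2] \<or> p2 = [5,1,2])" using h0_2 by (auto simp: ham3)
  have c11: "p0 = [3,1,2] \<longrightarrow> \<not> (p2 = [1,2,5] \<or> p2 = [2,5,1] \<or> p2 = [5,2,1])" using h0_2 by (auto simp: ham3)
  have c12: "p0 = [3,2,1] \<longrightarrow> \<not> (p2 = [1,5,2] \<or> p2 = [2,1,5] \<or> p2 = [5,1,2])" using h0_2 by (auto simp: ham3)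
  have c13: "p0 = [1,2,3] \<longrightarrow> \<not> (p3 = [3,1,4] \<or> p3 = [3,4,1] \<or> p3 = [4,3,1])" using h0_3 by (auto simp: ham3)
  have c14: "p0 = [1,3,2] \<longrightarrow> \<not> (p3 = [3,1,4] \<or> p3 = [3,4,1] \<or> p3 = [4,1,3])" using h0_3 by (auto simp: ham3)
  have c15: "p0 = [2,1,3] \<longrightarrow> \<not> (p3 = [1,3,4] \<or> p3 = [3,4,1] \<or> p3 = [4,3,1])" using h0_3 by (auto simp: ham3)
  have c16: "p0 = [2,3,1] \<longrightarrow> \<not> (p3 = [1,4,3] \<or> p3 = [3,1,4] \<or> p3 = [4,1,3])" using h0_3 by (auto simp: ham3)
  have c17: "p0 = [3,1,2] \<longrightarrow> \<not> (p3 = [1,3,4] \<or> p3 = [1,4,3] \<or> p3 = [4,3,1])" using h0_3 by (auto simp: ham3)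
  have c18: "p0 = [3,2,1] \<longrightarrow> \<not> (p3 = [1,3,4] \<or> p3 = [1,4,3] \<or> p3 = [4,1,3])" using h0_3 by (auto simp: ham3)
  have c19: "p0 = [1,2,3] \<longrightarrow> \<not> (p4 = [3,1,5] \<or> p4 = [3,5,1] \<or> p4 = [5,3,1])" using h0_4 by (auto simp: ham3)
  have c20: "p0 = [1,3,2] \<longrightarrow> \<not> (p4 = [3,1,5] \<or> p4 = [3,5,1] \<or> p4 = [5,1,3])" using h0_4 by (auto simp: ham3)
  have c21: "p0 = [2,1,3] \<longrightarrow> \<not> (p4 = [1,3,5] \<or> p4 = [3,5,1] \<or> p4 = [5,3,1])" using h0_4 by (auto simp: ham3)
  have c22: "p0 = [2,3,1] \<longrightarrow> \<not> (p4 = [1,5,3] \<or> p4 = [3,1,5] \<or> p4 = [5,1,3])" using h0_4 by (auto simp: ham3)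
  have c23: "p0 = [3,1,2] \<longrightarrow> \<not> (p4 = [1,3,5] \<or> p4 = [1,5,3] \<or> p4 = [5,3,1])" using h0_4 by (auto simp: ham3)
  have c24: "p0 = [3,2,1] \<longrightarrow> \<not> (p4 = [1,3,5] \<or> p4 = [1,5,3] \<or> p4 = [5,1,3])" using h0_4 by (auto simp: ham3)
  have c25: "p0 = [1,2,3] \<longrightarrow> \<not> (p6 = [2,3,4] \<or> p6 = [3,4,2] \<or> p6 = [4,3,2])" using h0_6 by (auto simp: ham3)
  have c26: "p0 = [1,3,2] \<longrightarrow> \<not> (p6 = [2,4,3] \<or> p6 = [3,2,4] \<or> p6 = [4,2,3])" using h0_6 by (auto simp: ham3)
  have c27: "p0 = [2,1,3] \<longrightarrow> \<not> (p6 = [3,2,4] \<or> p6 = [3,4,2] \<or> p6 = [4,3,2])" using h0_6 by (auto simp: ham3)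
  have c28: "p0 = [2,3,1] \<longrightarrow> \<not> (p6 = [3,2,4] \<or> p6 = [3,4,2] \<or> p6 = [4,2,3])" using h0_6 by (auto simp: ham3)
  have c29: "p0 = [3,1,2] \<longrightarrow> \<not> (p6 = [2,3,4] \<or> p6 = [2,4,3] \<or> p6 = [4,2,3])" using h0_6 by (auto simp: ham3)
  have c30: "p0 = [3,2,1] \<longrightarrow> \<not> (p6 = [2,3,4] \<or> p6 = [2,4,3] \<or> p6 = [4,3,2])" using h0_6 by (auto simp: ham3)
  have c31: "p0 = [1,2,3] \<longrightarrow> \<not> (p7 = [2,3,5] \<or> p7 = [3,5,2] \<or> p7 = [5,3,2])" using h0_7 by (auto simp: ham3)
  have c32: "p0 = [1,3,2] \<longrightarrow> \<not> (p7 = [2,5,3] \<or> p7 = [3,2,5] \<or> p7 = [5,2,3])" using h0_7 by (auto simp: ham3)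
  have c33: "p0 = [2,1,3] \<longrightarrow> \<not> (p7 = [3,2,5] \<or> p7 = [3,5,2] \<or> p7 = [5,3,2])" using h0_7 by (auto simp: ham3)
  have c34: "p0 = [2,3,1] \<longrightarrow> \<not> (p7 = [3,2,5] \<or> p7 = [3,5,2] \<or> p7 = [5,2,3])" using h0_7 by (auto simp: ham3)
  have c35: "p0 = [3,1,2] \<longrightarrow> \<not> (p7 = [2,3,5] \<or> p7 = [2,5,3] \<or> p7 = [5,2,3])" using h0_7 by (auto simp: ham3)
  have c36: "p0 = [3,2,1] \<longrightarrow> \<not> (p7 = [2,3,5] \<or> p7 = [2,5,3] \<or> p7 = [5,3,2])" using h0_7 by (auto simp: ham3)
  have c37: "p1 = [1,2,4] \<longrightarrow> \<not> (p2 = [2,1,5] \<or> p2 = [2,5,1] \<or> p2 = [5,1,2])" using h1_2 by (auto simp: ham3)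
  have c38: "p1 = [1,4,2] \<longrightarrow> \<not> (p2 = [2,1,5] \<or> p2 = [2,5,1] \<or> p2 = [5,2,1])" using h1_2 by (auto simp: ham3)
  have c39: "p1 = [2,1,4] \<longrightarrow> \<not> (p2 = [1,2,5] \<or> p2 = [1,5,2] \<or> p2 = [5,2,1])" using h1_2 by (auto simp: ham3)
  have c40: "p1 = [2,4,1] \<longrightarrow> \<not> (p2 = [1,2,5] \<or> p2 = [1,5,2] \<or> p2 = [5,1,2])" using h1_2 by (auto simp: ham3)
  have c41: "p1 = [4,1,2] \<longrightarrow> \<not> (p2 = [1,2,5] \<or> p2 = [2,5,1] \<or> p2 = [5,2,1])" using h1_2 by (auto simp: ham3)
  have c42: "p1 = [4,2,1] \<longrightarrow> \<not> (p2 = [1,5,2] \<or> p2 = [2,1,5] \<or> p2 = [5,1,2])" using h1_2 by (auto simp: ham3)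
  have c43: "p1 = [1,2,4] \<longrightarrow> \<not> (p3 = [3,4,1] \<or> p3 = [4,1,3] \<or> p3 = [4,3,1])" using h1_3 by (auto simp: ham3)
  have c44: "p1 = [1,4,2] \<longrightarrow> \<not> (p3 = [3,1,4] \<or> p3 = [4,1,3] \<or> p3 = [4,3,1])" using h1_3 by (auto simp: ham3)
  have c45: "p1 = [2,1,4] \<longrightarrow> \<not> (p3 = [1,4,3] \<or> p3 = [3,4,1] \<or> p3 = [4,3,1])" using h1_3 by (auto simp: ham3)
  have c46: "p1 = [2,4,1] \<longrightarrow> \<not> (p3 = [1,3,4] \<or> p3 = [3,1,4] \<or> p3 = [4,1,3])" using h1_3 by (auto simp: ham3)
  have c47: "p1 = [4,1,2] \<longrightarrow> \<not> (p3 = [1,3,4] \<or> p3 = [1,4,3] \<or> p3 = [3,4,1])" using h1_3 by (auto simp: ham3)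
  have c48: "p1 = [4,2,1] \<longrightarrow> \<not> (p3 = [1,3,4] \<or> p3 = [1,4,3] \<or> p3 = [3,1,4])" using h1_3 by (auto simp: ham3)
  have c49: "p1 = [1,2,4] \<longrightarrow> \<not> (p5 = [4,1,5] \<or> p5 = [4,5,1] \<or> p5 = [5,4,1])" using h1_5 by (auto simp: ham3)
  have c50: "p1 = [1,4,2] \<longrightarrow> \<not> (p5 = [4,1,5] \<or> p5 = [4,5,1] \<or> p5 = [5,1,4])" using h1_5 by (auto simp: ham3)
  have c51: "p1 = [2,1,4] \<longrightarrow> \<not> (p5 = [1,4,5] \<or> p5 = [4,5,1] \<or> p5 = [5,4,1])" using h1_5 by (auto simp: ham3)
  have c52: "p1 = [2,4,1] \<longrightarrow> \<not> (p5 = [1,5,4] \<or> p5 = [4,1,5] \<or> p5 = [5,1,4])" using h1_5 by (auto simp: ham3)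
  have c53: "p1 = [4,1,2] \<longrightarrow> \<not> (p5 = [1,4,5] \<or> p5 = [1,5,4] \<or> p5 = [5,4,1])" using h1_5 by (auto simp: ham3)
  have c54: "p1 = [4,2,1] \<longrightarrow> \<not> (p5 = [1,4,5] \<or> p5 = [1,5,4] \<or> p5 = [5,1,4])" using h1_5 by (auto simp: ham3)
  have c55: "p1 = [1,2,4] \<longrightarrow> \<not> (p6 = [2,4,3] \<or> p6 = [3,4,2] \<or> p6 = [4,3,2])" using h1_6 by (auto simp: ham3)
  have c56: "p1 = [1,4,2] \<longrightarrow> \<not> (p6 = [2,3,4] \<or> p6 = [3,2,4] \<or> p6 = [4,2,3])" using h1_6 by (auto simp: ham3)
  have c57: "p1 = [2,1,4] \<longrightarrow> \<not> (p6 = [3,4,2] \<or> p6 = [4,2,3] \<or> p6 = [4,3,2])" using h1_6 by (auto simp: ham3)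
  have c58: "p1 = [2,4,1] \<longrightarrow> \<not> (p6 = [3,2,4] \<or> p6 = [4,2,3] \<or> p6 = [4,3,2])" using h1_6 by (auto simp: ham3)
  have c59: "p1 = [4,1,2] \<longrightarrow> \<not> (p6 = [2,3,4] \<or> p6 = [2,4,3] \<or> p6 = [3,2,4])" using h1_6 by (auto simp: ham3)
  have c60: "p1 = [4,2,1] \<longrightarrow> \<not> (p6 = [2,3,4] \<or> p6 = [2,4,3] \<or> p6 = [3,4,2])" using h1_6 by (auto simp: ham3)
  have c61: "p1 = [1,2,4] \<longrightarrow> \<not> (p8 = [2,4,5] \<or> p8 = [4,5,2] \<or> p8 = [5,4,2])" using h1_8 by (auto simp: ham3)
  have c62: "p1 = [1,4,2] \<longrightarrow> \<not> (p8 = [2,5,4] \<or> p8 = [4,2,5] \<or> p8 = [5,2,4])" using h1_8 by (auto simp: ham3)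
  have c63: "p1 = [2,1,4] \<longrightarrow> \<not> (p8 = [4,2,5] \<or> p8 = [4,5,2] \<or> p8 = [5,4,2])" using h1_8 by (auto simp: ham3)
  have c64: "p1 = [2,4,1] \<longrightarrow> \<not> (p8 = [4,2,5] \<or> p8 = [4,5,2] \<or> p8 = [5,2,4])" using h1_8 by (auto simp: ham3)
  have c65: "p1 = [4,1,2] \<longrightarrow> \<not> (p8 = [2,4,5] \<or> p8 = [2,5,4] \<or> p8 = [5,2,4])" using h1_8 by (auto simp: ham3)
  have c66: "p1 = [4,2,1] \<longrightarrow> \<not> (p8 = [2,4,5] \<or> p8 = [2,5,4] \<or> p8 = [5,4,2])" using h1_8 by (auto simp: ham3)
  have c67: "p2 = [1,2,5] \<longrightarrow> \<not> (p4 = [3,5,1] \<or> p4 = [5,1,3] \<or> p4 = [5,3,1])" using h2_4 by (auto simp: ham3)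
  have c68: "p2 = [1,5,2] \<longrightarrow> \<not> (p4 = [3,1,5] \<or> p4 = [5,1,3] \<or> p4 = [5,3,1])" using h2_4 by (auto simp: ham3)
  have c69: "p2 = [2,1,5] \<longrightarrow> \<not> (p4 = [1,5,3] \<or> p4 = [3,5,1] \<or> p4 = [5,3,1])" using h2_4 by (auto simp: ham3)
  have c70: "p2 = [2,5,1] \<longrightarrow> \<not> (p4 = [1,3,5] \<or> p4 = [3,1,5] \<or> p4 = [5,1,3])" using h2_4 by (auto simp: ham3)
  have c71: "p2 = [5,1,2] \<longrightarrow> \<not> (p4 = [1,3,5] \<or> p4 = [1,5,3] \<or> p4 = [3,5,1])" using h2_4 by (auto simp: ham3)
  have c72: "p2 = [5,2,1] \<longrightarrow> \<not> (p4 = [1,3,5] \<or> p4 = [1,5,3] \<or> p4 = [3,1,5])" using h2_4 by (auto simp: ham3)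
  have c73: "p2 = [1,2,5] \<longrightarrow> \<not> (p5 = [4,5,1] \<or> p5 = [5,1,4] \<or> p5 = [5,4,1])" using h2_5 by (auto simp: ham3)
  have c74: "p2 = [1,5,2] \<longrightarrow> \<not> (p5 = [4,1,5] \<or> p5 = [5,1,4] \<or> p5 = [5,4,1])" using h2_5 by (auto simp: ham3)
  have c75: "p2 = [2,1,5] \<longrightarrow> \<not> (p5 = [1,5,4] \<or> p5 = [4,5,1] \<or> p5 = [5,4,1])" using h2_5 by (auto simp: ham3)
  have c76: "p2 = [2,5,1] \<longrightarrow> \<not> (p5 = [1,4,5] \<or> p5 = [4,1,5] \<or> p5 = [5,1,4])" using h2_5 by (auto simp: ham3)
  have c77: "p2 = [5,1,2] \<longrightarrow> \<not> (p5 = [1,4,5] \<or> p5 = [1,5,4] \<or> p5 = [4,5,1])" using h2_5 by (auto simp: ham3)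
  have c78: "p2 = [5,2,1] \<longrightarrow> \<not> (p5 = [1,4,5] \<or> p5 = [1,5,4] \<or> p5 = [4,1,5])" using h2_5 by (auto simp: ham3)
  have c79: "p2 = [1,2,5] \<longrightarrow> \<not> (p7 = [2,5,3] \<or> p7 = [3,5,2] \<or> p7 = [5,3,2])" using h2_7 by (auto simp: ham3)
  have c80: "p2 = [1,5,2] \<longrightarrow> \<not> (p7 = [2,3,5] \<or> p7 = [3,2,5] \<or> p7 = [5,2,3])" using h2_7 by (auto simp: ham3)
  have c81: "p2 = [2,1,5] \<longrightarrow> \<not> (p7 = [3,5,2] \<or> p7 = [5,2,3] \<or> p7 = [5,3,2])" using h2_7 by (auto simp: ham3)
  have c82: "p2 = [2,5,1] \<longrightarrow> \<not> (p7 = [3,2,5] \<or> p7 = [5,2,3] \<or> p7 = [5,3,2])" using h2_7 by (auto simp: ham3)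
  have c83: "p2 = [5,1,2] \<longrightarrow> \<not> (p7 = [2,3,5] \<or> p7 = [2,5,3] \<or> p7 = [3,2,5])" using h2_7 by (auto simp: ham3)
  have c84: "p2 = [5,2,1] \<longrightarrow> \<not> (p7 = [2,3,5] \<or> p7 = [2,5,3] \<or> p7 = [3,5,2])" using h2_7 by (auto simp: ham3)
  have c85: "p2 = [1,2,5] \<longrightarrow> \<not> (p8 = [2,5,4] \<or> p8 = [4,5,2] \<or> p8 = [5,4,2])" using h2_8 by (auto simp: ham3)
  have c86: "p2 = [1,5,2] \<longrightarrow> \<not> (p8 = [2,4,5] \<or> p8 = [4,2,5] \<or> p8 = [5,2,4])" using h2_8 by (auto simp: ham3)
  have c87: "p2 = [2,1,5] \<longrightarrow> \<not> (p8 = [4,5,2] \<or> p8 = [5,2,4] \<or> p8 = [5,4,2])" using h2_8 by (auto simp: ham3)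
  have c88: "p2 = [2,5,1] \<longrightarrow> \<not> (p8 = [4,2,5] \<or> p8 = [5,2,4] \<or> p8 = [5,4,2])" using h2_8 by (auto simp: ham3)
  have c89: "p2 = [5,1,2] \<longrightarrow> \<not> (p8 = [2,4,5] \<or> p8 = [2,5,4] \<or> p8 = [4,2,5])" using h2_8 by (auto simp: ham3)
  have c90: "p2 = [5,2,1] \<longrightarrow> \<not> (p8 = [2,4,5] \<or> p8 = [2,5,4] \<or> p8 = [4,5,2])" using h2_8 by (auto simp: ham3)
  have c91: "p3 = [1,3,4] \<longrightarrow> \<not> (p4 = [3,1,5] \<or> p4 = [3,5,1] \<or> p4 = [5,1,3])" using h3_4 by (auto simp: ham3)
  have c92: "p3 = [1,4,3] \<longrightarrow> \<not> (p4 = [3,1,5] \<or> p4 = [3,5,1] \<or> p4 = [5,3,1])" using h3_4 by (auto simp: ham3)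
  have c93: "p3 = [3,1,4] \<longrightarrow> \<not> (p4 = [1,3,5] \<or> p4 = [1,5,3] \<or> p4 = [5,3,1])" using h3_4 by (auto simp: ham3)
  have c94: "p3 = [3,4,1] \<longrightarrow> \<not> (p4 = [1,3,5] \<or> p4 = [1,5,3] \<or> p4 = [5,1,3])" using h3_4 by (auto simp: ham3)
  have c95: "p3 = [4,1,3] \<longrightarrow> \<not> (p4 = [1,3,5] \<or> p4 = [3,5,1] \<or> p4 = [5,3,1])" using h3_4 by (auto simp: ham3)
  have c96: "p3 = [4,3,1] \<longrightarrow> \<not> (p4 = [1,5,3] \<or> p4 = [3,1,5] \<or> p4 = [5,1,3])" using h3_4 by (auto simp: ham3)
  have c97: "p3 = [1,3,4] \<longrightarrow> \<not> (p5 = [4,1,5] \<or> p5 = [4,5,1] \<or> p5 = [5,4,1])" using h3_5 by (auto simp: ham3)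
  have c98: "p3 = [1,4,3] \<longrightarrow> \<not> (p5 = [4,1,5] \<or> p5 = [4,5,1] \<or> p5 = [5,1,4])" using h3_5 by (auto simp: ham3)
  have c99: "p3 = [3,1,4] \<longrightarrow> \<not> (p5 = [1,4,5] \<or> p5 = [4,5,1] \<or> p5 = [5,4,1])" using h3_5 by (auto simp: ham3)
  have c100: "p3 = [3,4,1] \<longrightarrow> \<not> (p5 = [1,5,4] \<or> p5 = [4,1,5] \<or> p5 = [5,1,4])" using h3_5 by (auto simp: ham3)
  have c101: "p3 = [4,1,3] \<longrightarrow> \<not> (p5 = [1,4,5] \<or> p5 = [1,5,4] \<or> p5 = [5,4,1])" using h3_5 by (auto simp: ham3)
  have c102: "p3 = [4,3,1] \<longrightarrow> \<not> (p5 = [1,4,5] \<or> p5 = [1,5,4] \<or> p5 = [5,1,4])" using h3_5 by (auto simp: ham3)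
  have c103: "p3 = [1,3,4] \<longrightarrow> \<not> (p6 = [2,4,3] \<or> p6 = [3,4,2] \<or> p6 = [4,2,3])" using h3_6 by (auto simp: ham3)
  have c104: "p3 = [1,4,3] \<longrightarrow> \<not> (p6 = [2,3,4] \<or> p6 = [3,2,4] \<or> p6 = [4,3,2])" using h3_6 by (auto simp: ham3)
  have c105: "p3 = [3,1,4] \<longrightarrow> \<not> (p6 = [2,4,3] \<or> p6 = [4,2,3] \<or> p6 = [4,3,2])" using h3_6 by (auto simp: ham3)
  have c106: "p3 = [3,4,1] \<longrightarrow> \<not> (p6 = [2,3,4] \<or> p6 = [4,2,3] \<or> p6 = [4,3,2])" using h3_6 by (auto simp: ham3)
  have c107: "p3 = [4,1,3] \<longrightarrow> \<not> (p6 = [2,3,4] \<or> p6 = [3,2,4] \<or> p6 = [3,4,2])" using h3_6 by (auto simp: ham3)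
  have c108: "p3 = [4,3,1] \<longrightarrow> \<not> (p6 = [2,4,3] \<or> p6 = [3,2,4] \<or> p6 = [3,4,2])" using h3_6 by (auto simp: ham3)
  have c109: "p3 = [1,3,4] \<longrightarrow> \<not> (p9 = [3,4,5] \<or> p9 = [4,5,3] \<or> p9 = [5,4,3])" using h3_9 by (auto simp: ham3)
  have c110: "p3 = [1,4,3] \<longrightarrow> \<not> (p9 = [3,5,4] \<or> p9 = [4,3,5] \<or> p9 = [5,3,4])" using h3_9 by (auto simp: ham3)
  have c111: "p3 = [3,1,4] \<longrightarrow> \<not> (p9 = [4,3,5] \<or> p9 = [4,5,3] \<or> p9 = [5,4,3])" using h3_9 by (auto simp: ham3)
  have c112: "p3 = [3,4,1] \<longrightarrow> \<not> (p9 = [4,3,5] \<or> p9 = [4,5,3] \<or> p9 = [5,3,4])" using h3_9 by (auto simp: ham3)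
  have c113: "p3 = [4,1,3] \<longrightarrow> \<not> (p9 = [3,4,5] \<or> p9 = [3,5,4] \<or> p9 = [5,3,4])" using h3_9 by (auto simp: ham3)
  have c114: "p3 = [4,3,1] \<longrightarrow> \<not> (p9 = [3,4,5] \<or> p9 = [3,5,4] \<or> p9 = [5,4,3])" using h3_9 by (auto simp: ham3)
  have c115: "p4 = [1,3,5] \<longrightarrow> \<not> (p5 = [4,5,1] \<or> p5 = [5,1,4] \<or> p5 = [5,4,1])" using h4_5 by (auto simp: ham3)
  have c116: "p4 = [1,5,3] \<longrightarrow> \<not> (p5 = [4,1,5] \<or> p5 = [5,1,4] \<or> p5 = [5,4,1])" using h4_5 by (auto simp: ham3)
  have c117: "p4 = [3,1,5] \<longrightarrow> \<not> (p5 = [1,5,4] \<or> p5 = [4,5,1] \<or> p5 = [5,4,1])" using h4_5 by (auto simp: ham3)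
  have c118: "p4 = [3,5,1] \<longrightarrow> \<not> (p5 = [1,4,5] \<or> p5 = [4,1,5] \<or> p5 = [5,1,4])" using h4_5 by (auto simp: ham3)
  have c119: "p4 = [5,1,3] \<longrightarrow> \<not> (p5 = [1,4,5] \<or> p5 = [1,5,4] \<or> p5 = [4,5,1])" using h4_5 by (auto simp: ham3)
  have c120: "p4 = [5,3,1] \<longrightarrow> \<not> (p5 = [1,4,5] \<or> p5 = [1,5,4] \<or> p5 = [4,1,5])" using h4_5 by (auto simp: ham3)
  have c121: "p4 = [1,3,5] \<longrightarrow> \<not> (p7 = [2,5,3] \<or> p7 = [3,5,2] \<or> p7 = [5,2,3])" using h4_7 by (auto simp: ham3)
  have c122: "p4 = [1,5,3] \<longrightarrow> \<not> (p7 = [2,3,5] \<or> p7 = [3,2,5] \<or> p7 = [5,3,2])" using h4_7 by (auto simp: ham3)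
  have c123: "p4 = [3,1,5] \<longrightarrow> \<not> (p7 = [2,5,3] \<or> p7 = [5,2,3] \<or> p7 = [5,3,2])" using h4_7 by (auto simp: ham3)
  have c124: "p4 = [3,5,1] \<longrightarrow> \<not> (p7 = [2,3,5] \<or> p7 = [5,2,3] \<or> p7 = [5,3,2])" using h4_7 by (auto simp: ham3)
  have c125: "p4 = [5,1,3] \<longrightarrow> \<not> (p7 = [2,3,5] \<or> p7 = [3,2,5] \<or> p7 = [3,5,2])" using h4_7 by (auto simp: ham3)
  have c126: "p4 = [5,3,1] \<longrightarrow> \<not> (p7 = [2,5,3] \<or> p7 = [3,2,5] \<or> p7 = [3,5,2])" using h4_7 by (auto simp: ham3)
  have c127: "p4 = [1,3,5] \<longrightarrow> \<not> (p9 = [3,5,4] \<or> p9 = [4,5,3] \<or> p9 = [5,4,3])" using h4_9 by (auto simp: ham3)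
  have c128: "p4 = [1,5,3] \<longrightarrow> \<not> (p9 = [3,4,5] \<or> p9 = [4,3,5] \<or> p9 = [5,3,4])" using h4_9 by (auto simp: ham3)
  have c129: "p4 = [3,1,5] \<longrightarrow> \<not> (p9 = [4,5,3] \<or> p9 = [5,3,4] \<or> p9 = [5,4,3])" using h4_9 by (auto simp: ham3)
  have c130: "p4 = [3,5,1] \<longrightarrow> \<not> (p9 = [4,3,5] \<or> p9 = [5,3,4] \<or> p9 = [5,4,3])" using h4_9 by (auto simp: ham3)
  have c131: "p4 = [5,1,3] \<longrightarrow> \<not> (p9 = [3,4,5] \<or> p9 = [3,5,4] \<or> p9 = [4,3,5])" using h4_9 by (auto simp: ham3)
  have c132: "p4 = [5,3,1] \<longrightarrow> \<not> (p9 = [3,4,5] \<or> p9 = [3,5,4] \<or> p9 = [4,5,3])" using h4_9 by (auto simp: ham3)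
  have c133: "p5 = [1,4,5] \<longrightarrow> \<not> (p8 = [2,5,4] \<or> p8 = [4,5,2] \<or> p8 = [5,2,4])" using h5_8 by (auto simp: ham3)
  have c134: "p5 = [1,5,4] \<longrightarrow> \<not> (p8 = [2,4,5] \<or> p8 = [4,2,5] \<or> p8 = [5,4,2])" using h5_8 by (auto simp: ham3)
  have c135: "p5 = [4,1,5] \<longrightarrow> \<not> (p8 = [2,5,4] \<or> p8 = [5,2,4] \<or> p8 = [5,4,2])" using h5_8 by (auto simp: ham3)
  have c136: "p5 = [4,5,1] \<longrightarrow> \<not> (p8 = [2,4,5] \<or> p8 = [5,2,4] \<or> p8 = [5,4,2])" using h5_8 by (auto simp: ham3)
  have c137: "p5 = [5,1,4] \<longrightarrow> \<not> (p8 = [2,4,5] \<or> p8 = [4,2,5] \<or> p8 = [4,5,2])" using h5_8 by (auto simp: ham3)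
  have c138: "p5 = [5,4,1] \<longrightarrow> \<not> (p8 = [2,5,4] \<or> p8 = [4,2,5] \<or> p8 = [4,5,2])" using h5_8 by (auto simp: ham3)
  have c139: "p5 = [1,4,5] \<longrightarrow> \<not> (p9 = [3,5,4] \<or> p9 = [4,5,3] \<or> p9 = [5,3,4])" using h5_9 by (auto simp: ham3)
  have c140: "p5 = [1,5,4] \<longrightarrow> \<not> (p9 = [3,4,5] \<or> p9 = [4,3,5] \<or> p9 = [5,4,3])" using h5_9 by (auto simp: ham3)
  have c141: "p5 = [4,1,5] \<longrightarrow> \<not> (p9 = [3,5,4] \<or> p9 = [5,3,4] \<or> p9 = [5,4,3])" using h5_9 by (auto simp: ham3)
  have c142: "p5 = [4,5,1] \<longrightarrow> \<not> (p9 = [3,4,5] \<or> p9 = [5,3,4] \<or> p9 = [5,4,3])" using h5_9 by (auto simp: ham3)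
  have c143: "p5 = [5,1,4] \<longrightarrow> \<not> (p9 = [3,4,5] \<or> p9 = [4,3,5] \<or> p9 = [4,5,3])" using h5_9 by (auto simp: ham3)
  have c144: "p5 = [5,4,1] \<longrightarrow> \<not> (p9 = [3,5,4] \<or> p9 = [4,3,5] \<or> p9 = [4,5,3])" using h5_9 by (auto simp: ham3)
  have c145: "p6 = [2,3,4] \<longrightarrow> \<not> (p7 = [3,2,5] \<or> p7 = [3,5,2] \<or> p7 = [5,2,3])" using h6_7 by (auto simp: ham3)
  have c146: "p6 = [2,4,3] \<longrightarrow> \<not> (p7 = [3,2,5] \<or> p7 = [3,5,2] \<or> p7 = [5,3,2])" using h6_7 by (auto simp: ham3)
  have c147: "p6 = [3,2,4] \<longrightarrow> \<not> (p7 = [2,3,5] \<or> p7 = [2,5,3] \<or> p7 = [5,3,2])" using h6_7 by (auto simp: ham3)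
  have c148: "p6 = [3,4,2] \<longrightarrow> \<not> (p7 = [2,3,5] \<or> p7 = [2,5,3] \<or> p7 = [5,2,3])" using h6_7 by (auto simp: ham3)
  have c149: "p6 = [4,2,3] \<longrightarrow> \<not> (p7 = [2,3,5] \<or> p7 = [3,5,2] \<or> p7 = [5,3,2])" using h6_7 by (auto simp: ham3)
  have c150: "p6 = [4,3,2] \<longrightarrow> \<not> (p7 = [2,5,3] \<or> p7 = [3,2,5] \<or> p7 = [5,2,3])" using h6_7 by (auto simp: ham3)
  have c151: "p6 = [2,3,4] \<longrightarrow> \<not> (p8 = [4,2,5] \<or> p8 = [4,5,2] \<or> p8 = [5,4,2])" using h6_8 by (auto simp: ham3)
  have c152: "p6 = [2,4,3] \<longrightarrow> \<not> (p8 = [4,2,5] \<or> p8 = [4,5,2] \<or> p8 = [5,2,4])" using h6_8 by (auto simp: ham3)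
  have c153: "p6 = [3,2,4] \<longrightarrow> \<not> (p8 = [2,4,5] \<or> p8 = [4,5,2] \<or> p8 = [5,4,2])" using h6_8 by (auto simp: ham3)
  have c154: "p6 = [3,4,2] \<longrightarrow> \<not> (p8 = [2,5,4] \<or> p8 = [4,2,5] \<or> p8 = [5,2,4])" using h6_8 by (auto simp: ham3)
  have c155: "p6 = [4,2,3] \<longrightarrow> \<not> (p8 = [2,4,5] \<or> p8 = [2,5,4] \<or> p8 = [5,4,2])" using h6_8 by (auto simp: ham3)
  have c156: "p6 = [4,3,2] \<longrightarrow> \<not> (p8 = [2,4,5] \<or> p8 = [2,5,4] \<or> p8 = [5,2,4])" using h6_8 by (auto simp: ham3)
  have c157: "p6 = [2,3,4] \<longrightarrow> \<not> (p9 = [3,4,5] \<or> p9 = [4,5,3] \<or> p9 = [5,4,3])" using h6_9 by (auto simp: ham3)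
  have c158: "p6 = [2,4,3] \<longrightarrow> \<not> (p9 = [3,5,4] \<or> p9 = [4,3,5] \<or> p9 = [5,3,4])" using h6_9 by (auto simp: ham3)
  have c159: "p6 = [3,2,4] \<longrightarrow> \<not> (p9 = [4,3,5] \<or> p9 = [4,5,3] \<or> p9 = [5,4,3])" using h6_9 by (auto simp: ham3)
  have c160: "p6 = [3,4,2] \<longrightarrow> \<not> (p9 = [4,3,5] \<or> p9 = [4,5,3] \<or> p9 = [5,3,4])" using h6_9 by (auto simp: ham3)
  have c161: "p6 = [4,2,3] \<longrightarrow> \<not> (p9 = [3,4,5] \<or> p9 = [3,5,4] \<or> p9 = [5,3,4])" using h6_9 by (auto simp: ham3)
  have c162: "p6 = [4,3,2] \<longrightarrow> \<not> (p9 = [3,4,5] \<or> p9 = [3,5,4] \<or> p9 = [5,4,3])" using h6_9 by (auto simp: ham3)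
  have c163: "p7 = [2,3,5] \<longrightarrow> \<not> (p8 = [4,5,2] \<or> p8 = [5,2,4] \<or> p8 = [5,4,2])" using h7_8 by (auto simp: ham3)
  have c164: "p7 = [2,5,3] \<longrightarrow> \<not> (p8 = [4,2,5] \<or> p8 = [5,2,4] \<or> p8 = [5,4,2])" using h7_8 by (auto simp: ham3)
  have c165: "p7 = [3,2,5] \<longrightarrow> \<not> (p8 = [2,5,4] \<or> p8 = [4,5,2] \<or> p8 = [5,4,2])" using h7_8 by (auto simp: ham3)
  have c166: "p7 = [3,5,2] \<longrightarrow> \<not> (p8 = [2,4,5] \<or> p8 = [4,2,5] \<or> p8 = [5,2,4])" using h7_8 by (auto simp: ham3)
  have c167: "p7 = [5,2,3] \<longrightarrow> \<not> (p8 = [2,4,5] \<or> p8 = [2,5,4] \<or> p8 = [4,5,2])" using h7_8 by (auto simp: ham3)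
  have c168: "p7 = [5,3,2] \<longrightarrow> \<not> (p8 = [2,4,5] \<or> p8 = [2,5,4] \<or> p8 = [4,2,5])" using h7_8 by (auto simp: ham3)
  have c169: "p7 = [2,3,5] \<longrightarrow> \<not> (p9 = [3,5,4] \<or> p9 = [4,5,3] \<or> p9 = [5,4,3])" using h7_9 by (auto simp: ham3)
  have c170: "p7 = [2,5,3] \<longrightarrow> \<not> (p9 = [3,4,5] \<or> p9 = [4,3,5] \<or> p9 = [5,3,4])" using h7_9 by (auto simp: ham3)
  have c171: "p7 = [3,2,5] \<longrightarrow> \<not> (p9 = [4,5,3] \<or> p9 = [5,3,4] \<or> p9 = [5,4,3])" using h7_9 by (auto simp: ham3)
  have c172: "p7 = [3,5,2] \<longrightarrow> \<not> (p9 = [4,3,5] \<or> p9 = [5,3,4] \<or> p9 = [5,4,3])" using h7_9 by (auto simp: ham3)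
  have c173: "p7 = [5,2,3] \<longrightarrow> \<not> (p9 = [3,4,5] \<or> p9 = [3,5,4] \<or> p9 = [4,3,5])" using h7_9 by (auto simp: ham3)
  have c174: "p7 = [5,3,2] \<longrightarrow> \<not> (p9 = [3,4,5] \<or> p9 = [3,5,4] \<or> p9 = [4,5,3])" using h7_9 by (auto simp: ham3)
  have c175: "p8 = [2,4,5] \<longrightarrow> \<not> (p9 = [3,5,4] \<or> p9 = [4,5,3] \<or> p9 = [5,3,4])" using h8_9 by (auto simp: ham3)
  have c176: "p8 = [2,5,4] \<longrightarrow> \<not> (p9 = [3,4,5] \<or> p9 = [4,3,5] \<or> p9 = [5,4,3])" using h8_9 by (auto simp: ham3)
  have c177: "p8 = [4,2,5] \<longrightarrow> \<not> (p9 = [3,5,4] \<or> p9 = [5,3,4] \<or> p9 = [5,4,3])" using h8_9 by (auto simp: ham3)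
  have c178: "p8 = [4,5,2] \<longrightarrow> \<not> (p9 = [3,4,5] \<or> p9 = [5,3,4] \<or> p9 = [5,4,3])" using h8_9 by (auto simp: ham3)
  have c179: "p8 = [5,2,4] \<longrightarrow> \<not> (p9 = [3,4,5] \<or> p9 = [4,3,5] \<or> p9 = [4,5,3])" using h8_9 by (auto simp: ham3)
  have c180: "p8 = [5,4,2] \<longrightarrow> \<not> (p9 = [3,5,4] \<or> p9 = [4,3,5] \<or> p9 = [4,5,3])" using h8_9 by (auto simp: ham3)
  show False using d0 d1 d2 d3 d4 d5 d6 d7 d8 d9 c1 c2 c3 c4 c5 c6 c7 c8 c9 c10 c11 c12 c13 c14 c15 c16 c17 c18 c19 c20 c21 c22 c23 c24 c25 c26 c27 c28 c29 c30 c31 c32 c33 c34 c35 c36 c37 c38 c39 c40 c41 c42 c43 c44 c45 c46 c47 c48 c49 c50 c51 c52 c53 c54 c55 c56 c57 c58 c59 c60 c61 c62 c63 c64 c65 c66 c67 c68 c69 c70 c71 c72 c73 c74 c75 c76 c77 c78 c79 c80 c81 c82 c83 c84 c85 c86 c87 c88 c89 c90 c91 c92 c93 c94 c95 c96 c97 c98 c99 c100 c101 c102 c103 c104 c105 c106 c107 c108 c109 c110 c111 c112 c113 c114 c115 c116 c117 c118 c119 c120 c121 c122 c123 c124 c125 c126 c127 c128 c129 c130 c131 c132 c133 c134 c135 c136 c137 c138 c139 c140 c141 c142 c143 c144 c145 c146 c147 c148 c149 c150 c151 c152 c153 c154 c155 c156 c157 c158 c159 c160 c161 c162 c163 c164 c165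 c166 c167 c168 c169 c170 c171 c172 c173 c174 c175 c176 c177 c178 c179 c180 by sat
qed

lemma ham_le: "hamming X Y \<le> length X"
  unfolding hamming_def by (rule order_trans[OF card_mono[of "{..<length X}"]]) auto

lemma adj:
  assumes v: "valid_pi 3 5 pi" and lt: "max_distortion 3 5 pi < 3"
    and S: "S \<in> msets 3 5" and S': "S' \<in> msets 3 5" and sz: "size (msym_diff S S') = 2"
  shows "hamming (pi S) (pi S') \<le> 2"
proof -
  let ?D = "{hamming (pi S) (pi S') | S S'.
      S \<in> msets 3 5 \<and> S' \<in> msets 3 5 \<and> size (msym_diff S S') = 2}"
  have "?D \<subseteq> {..3}"
  proof
    fix x assume "x \<in> ?D"
    then obtain A B where "x = hamming (pi A) (pi B)" "A \<in> msets 3 5" by blast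
    then show "x \<in> {..3}" using v ham_le[of "pi A" "pi B"] unfolding valid_pi_def by auto
  qed
  then have f: "finite ?D" by (rule finite_subset) simp
  have "hamming (pi S) (pi S') \<in> ?D" using S S' sz by blast
  then have "hamming (pi S) (pi S') \<le> max_distortion 3 5 pi"
    unfolding max_distortion_def using f by (rule Max_ge[rotated])
  then show ?thesis using lt by simp
qed

lemma tri:
  assumes v: "valid_pi 3 5 pi" and "a \<noteq> b" "a \<noteq> c" "b \<noteq> c" "{#a,b,c#} \<in> msets 3 5"
  shows "pi {#a,b,c#}=[a,b,c] \<or> pi {#a,b,c#}=[a,c,b] \<or> pi {#a,b,c#}=[b,a,c] \<or> pi {#a,b,c#}=[b,c,a] \<or> pi {#a,b,c#}=[c,a,b] \<or> pi {#a,b,c#}=[c,b,a]"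
  using assms v unfolding valid_pi_def by (intro perm3) auto

theorem theorem3p1:
  fixes pi :: "nat multiset \<Rightarrow> nat list"
  assumes "valid_pi 3 5 pi"
  shows "max_distortion 3 5 pi \<ge> 3"
proof (rule ccontr)
  assume "\<not> max_distortion 3 5 pi \<ge> 3"
  then have lt: "max_distortion 3 5 pi < 3" by simp
  have d0: "pi {#1,2,3#} = [1,2,3] \<or> pi {#1,2,3#} = [1,3,2] \<or> pi {#1,2,3#} = [2,1,3] \<or> pi {#1,2,3#} = [2,3,1] \<or> pi {#1,2,3#} = [3,1,2] \<or> pi {#1,2,3#} = [3,2,1]"
    by (rule tri[OF assms]) (simp_all add: msets_def)
  have d1: "pi {#1,2,4#} = [1,2,4] \<or> pi {#1,2,4#} = [1,4,2] \<or> pi {#1,2,4#} = [2,1,4] \<or> pi {#1,2,4#} = [2,4,1] \<or> pi {#1,2,4#} = [4,1,2] \<or> pi {#1,2,4#} = [4,2,1]"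
    by (rule tri[OF assms]) (simp_all add: msets_def)
  have d2: "pi {#1,2,5#} = [1,2,5] \<or> pi {#1,2,5#} = [1,5,2] \<or> pi {#1,2,5#} = [2,1,5] \<or> pi {#1,2,5#} = [2,5,1] \<or> pi {#1,2,5#} = [5,1,2] \<or> pi {#1,2,5#} = [5,2,1]"
    by (rule tri[OF assms]) (simp_all add: msets_def)
  have d3: "pi {#1,3,4#} = [1,3,4] \<or> pi {#1,3,4#} = [1,4,3] \<or> pi {#1,3,4#} = [3,1,4] \<or> pi {#1,3,4#} = [3,4,1] \<or> pi {#1,3,4#} = [4,1,3] \<or> pi {#1,3,4#} = [4,3,1]"
    by (rule tri[OF assms]) (simp_all add: msets_def)
  have d4: "pi {#1,3,5#} = [1,3,5] \<or> pi {#1,3,5#} = [1,5,3] \<or> pi {#1,3,5#} = [3,1,5] \<or> pi {#1,3,5#} = [3,5,1] \<or> pi {#1,3,5#} = [5,1,3] \<or> pi {#1,3,5#} = [5,3,1]"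
    by (rule tri[OF assms]) (simp_all add: msets_def)
  have d5: "pi {#1,4,5#} = [1,4,5] \<or> pi {#1,4,5#} = [1,5,4] \<or> pi {#1,4,5#} = [4,1,5] \<or> pi {#1,4,5#} = [4,5,1] \<or> pi {#1,4,5#} = [5,1,4] \<or> pi {#1,4,5#} = [5,4,1]"
    by (rule tri[OF assms]) (simp_all add: msets_def)
  have d6: "pi {#2,3,4#} = [2,3,4] \<or> pi {#2,3,4#} = [2,4,3] \<or> pi {#2,3,4#} = [3,2,4] \<or> pi {#2,3,4#} = [3,4,2] \<or> pi {#2,3,4#} = [4,2,3] \<or> pi {#2,3,4#} = [4,3,2]"
    by (rule tri[OF assms]) (simp_all add: msets_def)
  have d7: "pi {#2,3,5#} = [2,3,5] \<or> pi {#2,3,5#} = [2,5,3] \<or> pi {#2,3,5#} = [3,2,5] \<or> pi {#2,3,5#} = [3,5,2] \<or> pi {#2,3,5#} = [5,2,3] \<or> pi {#2,3,5#} = [5,3,2]"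
    by (rule tri[OF assms]) (simp_all add: msets_def)
  have d8: "pi {#2,4,5#} = [2,4,5] \<or> pi {#2,4,5#} = [2,5,4] \<or> pi {#2,4,5#} = [4,2,5] \<or> pi {#2,4,5#} = [4,5,2] \<or> pi {#2,4,5#} = [5,2,4] \<or> pi {#2,4,5#} = [5,4,2]"
    by (rule tri[OF assms]) (simp_all add: msets_def)
  have d9: "pi {#3,4,5#} = [3,4,5] \<or> pi {#3,4,5#} = [3,5,4] \<or> pi {#3,4,5#} = [4,3,5] \<or> pi {#3,4,5#} = [4,5,3] \<or> pi {#3,4,5#} = [5,3,4] \<or> pi {#3,4,5#} = [5,4,3]"
    by (rule tri[OF assms]) (simp_all add: msets_def)
  have h0_1: "hamming (pi {#1,2,3#}) (pi {#1,2,4#}) \<le> 2" by (rule adj[OF assms lt]) (simp_all add: msets_def msym_diff_def)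
  have h0_2: "hamming (pi {#1,2,3#}) (pi {#1,2,5#}) \<le> 2" by (rule adj[OF assms lt]) (simp_all add: msets_def msym_diff_def)
  have h0_3: "hamming (pi {#1,2,3#}) (pi {#1,3,4#}) \<le> 2" by (rule adj[OF assms lt]) (simp_all add: msets_def msym_diff_def)
  have h0_4: "hamming (pi {#1,2,3#}) (pi {#1,3,5#}) \<le> 2" by (rule adj[OF assms lt]) (simp_all add: msets_def msym_diff_def)
  have h0_6: "hamming (pi {#1,2,3#}) (pi {#2,3,4#}) \<le> 2" by (rule adj[OF assms lt]) (simp_all add: msets_def msym_diff_def)
  have h0_7: "hamming (pi {#1,2,3#}) (pi {#2,3,5#}) \<le> 2" by (rule adj[OF assms lt]) (simp_all add: msets_def msym_diff_def)
  have h1_2: "hamming (pi {#1,2,4#}) (pi {#1,2,5#}) \<le> 2" by (rule adj[OF assms lt]) (simp_all add: msets_def msym_diff_def)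
  have h1_3: "hamming (pi {#1,2,4#}) (pi {#1,3,4#}) \<le> 2" by (rule adj[OF assms lt]) (simp_all add: msets_def msym_diff_def)
  have h1_5: "hamming (pi {#1,2,4#}) (pi {#1,4,5#}) \<le> 2" by (rule adj[OF assms lt]) (simp_all add: msets_def msym_diff_def)
  have h1_6: "hamming (pi {#1,2,4#}) (pi {#2,3,4#}) \<le> 2" by (rule adj[OF assms lt]) (simp_all add: msets_def msym_diff_def)
  have h1_8: "hamming (pi {#1,2,4#}) (pi {#2,4,5#}) \<le> 2" by (rule adj[OF assms lt]) (simp_all add: msets_def msym_diff_def)
  have h2_4: "hamming (pi {#1,2,5#}) (pi {#1,3,5#}) \<le> 2" by (rule adj[OF assms lt]) (simp_all add: msets_def msym_diff_def)
  have h2_5: "hamming (pi {#1,2,5#}) (pi {#1,4,5#}) \<le> 2" by (rule adj[OF assms lt]) (simp_all add: msets_def msym_diff_def)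
  have h2_7: "hamming (pi {#1,2,5#}) (pi {#2,3,5#}) \<le> 2" by (rule adj[OF assms lt]) (simp_all add: msets_def msym_diff_def)
  have h2_8: "hamming (pi {#1,2,5#}) (pi {#2,4,5#}) \<le> 2" by (rule adj[OF assms lt]) (simp_all add: msets_def msym_diff_def)
  have h3_4: "hamming (pi {#1,3,4#}) (pi {#1,3,5#}) \<le> 2" by (rule adj[OF assms lt]) (simp_all add: msets_def msym_diff_def)
  have h3_5: "hamming (pi {#1,3,4#}) (pi {#1,4,5#}) \<le> 2" by (rule adj[OF assms lt]) (simp_all add: msets_def msym_diff_def)
  have h3_6: "hamming (pi {#1,3,4#}) (pi {#2,3,4#}) \<le> 2" by (rule adj[OF assms lt]) (simp_all add: msets_def msym_diff_def)
  have h3_9: "hamming (pi {#1,3,4#}) (pi {#3,4,5#}) \<le> 2" by (rule adj[OF assms lt]) (simp_all add: msets_def msym_diff_def)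
  have h4_5: "hamming (pi {#1,3,5#}) (pi {#1,4,5#}) \<le> 2" by (rule adj[OF assms lt]) (simp_all add: msets_def msym_diff_def)
  have h4_7: "hamming (pi {#1,3,5#}) (pi {#2,3,5#}) \<le> 2" by (rule adj[OF assms lt]) (simp_all add: msets_def msym_diff_def)
  have h4_9: "hamming (pi {#1,3,5#}) (pi {#3,4,5#}) \<le> 2" by (rule adj[OF assms lt]) (simp_all add: msets_def msym_diff_def)
  have h5_8: "hamming (pi {#1,4,5#}) (pi {#2,4,5#}) \<le> 2" by (rule adj[OF assms lt]) (simp_all add: msets_def msym_diff_def)
  have h5_9: "hamming (pi {#1,4,5#}) (pi {#3,4,5#}) \<le> 2" by (rule adj[OF assms lt]) (simp_all add: msets_def msym_diff_def)
  have h6_7: "hamming (pi {#2,3,4#}) (pi {#2,3,5#}) \<le> 2" by (rule adj[OF assms lt]) (simp_all add: msets_def msym_diff_def)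
  have h6_8: "hamming (pi {#2,3,4#}) (pi {#2,4,5#}) \<le> 2" by (rule adj[OF assms lt]) (simp_all add: msets_def msym_diff_def)
  have h6_9: "hamming (pi {#2,3,4#}) (pi {#3,4,5#}) \<le> 2" by (rule adj[OF assms lt]) (simp_all add: msets_def msym_diff_def)
  have h7_8: "hamming (pi {#2,3,5#}) (pi {#2,4,5#}) \<le> 2" by (rule adj[OF assms lt]) (simp_all add: msets_def msym_diff_def)
  have h7_9: "hamming (pi {#2,3,5#}) (pi {#3,4,5#}) \<le> 2" by (rule adj[OF assms lt]) (simp_all add: msets_def msym_diff_def)
  have h8_9: "hamming (pi {#2,4,5#}) (pi {#3,4,5#}) \<le> 2" by (rule adj[OF assms lt]) (simp_all add: msets_def msym_diff_def)
  show False by (rule core[OF d0 d1 d2 d3 d4 d5 d6 d7 d8 d9 h0_1 h0_2 h0_3 h0_4 h0_6 h0_7 h1_2 h1_3 h1_5 h1_6 h1_8 h2_4 h2_5 h2_7 h2_8 h3_4 h3_5 h3_6 h3_9 h4_5 h4_7 h4_9 h5_8 h5_9 h6_7 h6_8 h6_9 h7_8 h7_9 h8_9])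
qed

end
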